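(* For a prime $p$ and an integer $n\geq p$, $B_{n-p}\equiv V_n\pmod p$.
   Context: $B_n$ is the $n$-th Bell number (number of partitions of an $n$-element set). $V_n$ is the number of partitions of $\{1,\dots,n\}$ containing no singleton blocks; equivalently $\sum_{n\geq0}V_n\frac{t^n}{n!}=e^{e^t-1-t}$. *)

theory Defs
  imports Main "HOL-Library.Disjoint_Sets" "HOL-Number_Theory.Cong"
begin

definition Bell :: "nat \<Rightarrow> nat" where
  "Bell n = card {P. partition_on {1..n} P}"

definition V :: "nat \<Rightarrow> nat" where
  "V n = card {P. partition_on {1..n} P \<and> (\<forall>b\<in>P. card b \<noteq> 1)}"

end

theory Submission
  imports Defs "HOL-Computational_Algebra.Primes"
begin


lemma funpow_mult_fix:
  assumes "(f^^d) x = x" shows "(f^^(d*k)) x = x"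
proof (induction k)
  case 0 then show ?case by simp
next
  case (Suc k)
  have "(f^^(d*Suc k)) x = (f^^d) ((f^^(d*k)) x)"
    by (simp only: mult_Suc_right funpow_add comp_apply)
  then show ?case using Suc assms by simp
qed

lemma funpow_mod_fix:
  assumes "(f^^p) x = x" shows "(f^^k) x = (f^^(k mod p)) x"
proof -
  have "(f^^k) x = (f^^(k mod p)) ((f^^(p*(k div p))) x)"
    by (metis funpow_add comp_apply mod_mult_div_eq)
  then show ?thesis using funpow_mult_fix[OF assms] by simp
qed

lemma fix_pow:
  assumes p: "prime (p::nat)" and fp: "(f^^p) x = x" and fd: "(f^^d) x = x"
    and d: "0 < d" "d < p"
  shows "f x = x"
proof -
  have "coprime d p" using p d
    by (metis coprime_commute prime_imp_coprime_nat dvd_imp_le not_less)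
  hence g: "gcd d p = 1" by simp
  obtain k q where kq: "d * k = p * q + 1"
    using bezout_nat[of d p] d g by auto
  have "(f^^(d*k)) x = x" by (rule funpow_mult_fix[OF fd])
  moreover have "(f^^(d*k)) x = f ((f^^(p*q)) x)"
    using kq by (simp add: funpow_add[symmetric])
  ultimately show ?thesis using funpow_mult_fix[OF fp, of q] by simp
qed

lemma orbit_mod:
  fixes f :: "'a \<Rightarrow> 'a" and p :: nat
  assumes p: "prime p" and fin: "finite X" and cl: "\<And>x. x \<in> X \<Longrightarrow> f x \<in> X"
    and per: "\<And>x. x \<in> X \<Longrightarrow> (f^^p) x = x"
  shows "[card X = card {x\<in>X. f x = x}] (mod p)"
proof -
  define orb where "orb x = (\<lambda>i. (f^^i) x) ` {..<p}" for x
  define N where "N = {x\<in>X. f x \<noteq> x}"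
  have p0: "p > 0" using p prime_gt_0_nat by blast
  have clp: "(f^^i) x \<in> X" if "x \<in> X" for x i
    using that by (induction i) (auto intro: cl)
  have inN: "(f^^i) x \<in> N" if "x \<in> N" "i < p" for x i
  proof -
    have xX: "x \<in> X" and fx: "f x \<noteq> x" using that N_def by auto
    have "f ((f^^i) x) \<noteq> (f^^i) x"
    proof
      assume h: "f ((f^^i) x) = (f^^i) x"
      hence "(f^^j) ((f^^i) x) = (f^^i) x" for j by (induction j) auto
      hence "(f^^(p - i)) ((f^^i) x) = (f^^i) x" by blast
      hence "(f^^i) x = x" using per[OF xX] that(2)
        by (metis funpow_add comp_apply le_add_diff_inverse2 less_imp_le)
      thus False using h fx by simp
    qed
    thus ?thesis using clp xX N_def by auto
  qed
  have orbN: "orb x \<subseteq> N" if "x \<in> N" for x using inN that orb_def by auto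
  have xorb: "x \<in> orb x" for x using p0 orb_def by force
  have orb_sub: "orb z \<subseteq> orb x" if zx: "z \<in> orb x" and xX: "x \<in> X" for x z
  proof
    fix y assume "y \<in> orb z"
    obtain i where z: "z = (f^^i) x" using zx orb_def by auto
    obtain j where y: "y = (f^^j) z" using \<open>y \<in> orb z\<close> orb_def by auto
    have "y = (f^^(j+i)) x" using y z by (simp add: funpow_add)
    also have "\<dots> = (f^^((j+i) mod p)) x" using funpow_mod_fix per xX by metis
    finally show "y \<in> orb x" using orb_def p0 by auto
  qed
  have orb_eq: "orb z = orb x" if zx: "z \<in> orb x" and xX: "x \<in> X" for x z
  proof
    show "orb z \<subseteq> orb x" using orb_sub zx xX by blast
    obtain i where i: "z = (f^^i) x" "i < p" using zx orb_def by auto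
    have "(f^^(p-i)) z = x" using i per[OF xX]
      by (metis funpow_add comp_apply le_add_diff_inverse2 less_imp_le)
    hence "x \<in> orb z"
    proof (cases "i = 0")
      case True then show ?thesis using i xorb by simp
    next
      case False
      then have "p - i < p" using i by simp
      then show ?thesis using \<open>(f^^(p-i)) z = x\<close> orb_def by force
    qed
    moreover have "z \<in> X" using i clp xX by auto
    ultimately show "orb x \<subseteq> orb z" using orb_sub by blast
  qed
  have card_orb: "card (orb x) = p" if "x \<in> N" for x
  proof -
    have "inj_on (\<lambda>i. (f^^i) x) {..<p}"
    proof (rule inj_onI, rule ccontr)
      fix i j assume ij: "i \<in> {..<p}" "j \<in> {..<p}" "(f^^i) x = (f^^j) x" "i \<noteq> j"
      have xX: "x \<in> X" and fx: "f x \<noteq> x" using that N_def by auto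
      have key: "(f^^(b-a)) x = x" if "a < b" "b < p" "(f^^a) x = (f^^b) x" for a b
      proof -
        have "(f^^(p-a)) ((f^^a) x) = x" using per[OF xX] that
          by (metis funpow_add comp_apply le_add_diff_inverse2 less_imp_le less_trans)
        moreover have "(f^^(p-a)) ((f^^b) x) = (f^^(b-a)) ((f^^p) x)"
        proof -
          have e: "p - a + b = (b - a) + p" using that by simp
          have "(f^^(p-a)) ((f^^b) x) = (f^^(p-a+b)) x" by (simp add: funpow_add)
          also have "\<dots> = (f^^((b-a)+p)) x" using e by simp
          also have "\<dots> = (f^^(b-a)) ((f^^p) x)" by (simp add: funpow_add)
          finally show ?thesis .
        qed
        ultimately show ?thesis using that per[OF xX] by simp
      qed
      show False
      proof (cases "i < j")
        case True
        then have "(f^^(j-i)) x = x" using key[of i j] ij by auto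
        moreover have "0 < j - i" "j - i < p" using True ij by auto
        ultimately show ?thesis using fix_pow[OF p per[OF xX]] fx by blast
      next
        case False
        then have "j < i" using ij by simp
        then have "(f^^(i-j)) x = x" using key[of j i] ij by auto
        moreover have "0 < i - j" "i - j < p" using \<open>j < i\<close> ij by auto
        ultimately show ?thesis using fix_pow[OF p per[OF xX]] fx by blast
      qed
    qed
    then show ?thesis using orb_def card_image by fastforce
  qed
  have finN: "finite N" using fin N_def by auto
  have UN: "\<Union>(orb ` N) = N" using orbN xorb by blast
  have "p * card (orb ` N) = card (\<Union>(orb ` N))"
  proof (rule card_partition)
    show "finite (orb ` N)" using finN by simp
    show "finite (\<Union>(orb ` N))" using UN finN by simp
    show "\<And>c. c \<in> orb ` N \<Longrightarrow> card c = p" using card_orb by auto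
    show "\<And>c1 c2. c1 \<in> orb ` N \<Longrightarrow> c2 \<in> orb ` N \<Longrightarrow> c1 \<noteq> c2 \<Longrightarrow> c1 \<inter> c2 = {}"
    proof -
      fix c1 c2 assume "c1 \<in> orb ` N" "c2 \<in> orb ` N" "c1 \<noteq> c2"
      then obtain x y where xy: "c1 = orb x" "c2 = orb y" "x \<in> N" "y \<in> N" by auto
      show "c1 \<inter> c2 = {}"
      proof (rule ccontr)
        assume "c1 \<inter> c2 \<noteq> {}"
        then obtain z where "z \<in> orb x" "z \<in> orb y" using xy by auto
        hence "orb x = orb y" using orb_eq xy N_def by (metis (no_types, lifting) mem_Collect_eq)
        thus False using xy \<open>c1 \<noteq> c2\<close> by simp
      qed
    qed
  qed
  hence cN: "card N = p * card (orb ` N)" using UN by simp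
  have "X = N \<union> {x\<in>X. f x = x}" "N \<inter> {x\<in>X. f x = x} = {}" using N_def by auto
  hence "card X = card N + card {x\<in>X. f x = x}"
    using fin by (metis (no_types, lifting) card_Un_disjoint finite_Un)
  thus ?thesis using cN by (simp add: cong_def)
qed



definition sig :: "nat \<Rightarrow> nat \<Rightarrow> nat \<Rightarrow> nat" where
  "sig m p i = (if m < i \<and> i < m + p then Suc i else if i = m + p then Suc m else i)"

lemma sig_pow:
  assumes "0 < p"
  shows "(sig m p ^^ k) i = (if m < i \<and> i \<le> m+p then Suc m + ((i - Suc m + k) mod p) else i)"
proof (induction k)
  case 0
  then show ?case by auto
next
  case (Suc k)
  have "(sig m p ^^ Suc k) i = sig m p ((sig m p ^^ k) i)" by simp
  also have "\<dots> = (if m < i \<and> i \<le> m+p then Suc m + ((i - Suc m + Suc k) mod p) else i)"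
  proof (cases "m < i \<and> i \<le> m+p")
    case True
    define r where "r = (i - Suc m + k) mod p"
    have r: "r < p" using assms r_def by simp
    have e: "(i - Suc m + Suc k) mod p = (if Suc r = p then 0 else Suc r)"
      unfolding r_def by (simp add: mod_Suc)
    show ?thesis using True Suc r e unfolding sig_def r_def[symmetric] by auto
  next
    case False
    have "(sig m p ^^ k) i = i" using Suc False by simp
    have "i \<noteq> m + p" using False assms by auto
    then show ?thesis using False \<open>(sig m p ^^ k) i = i\<close> unfolding sig_def by auto
  qed
  finally show ?case .
qed

lemma sig_pow_p: assumes "0 < p" shows "(sig m p ^^ p) = id"
proof (rule ext)
  fix x
  show "(sig m p ^^ p) x = id x"
  proof (cases "m < x \<and> x \<le> m + p")
    case True
    have "x + p - Suc m = (x - Suc m) + p" using True by simp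
    hence "(x + p - Suc m) mod p = x - Suc m" using True
      by (metis (no_types, opaque_lifting) add.commute add_Suc diff_add_inverse
        less_diff_conv less_eq_Suc_le less_iff_Suc_add mod_add_self1 mod_less
        ordered_cancel_comm_monoid_diff_class.add_diff_assoc)
    then show ?thesis using True assms by (simp add: sig_pow)
  next
    case False
    then show ?thesis using assms by (auto simp add: sig_pow)
  qed
qed

lemma sig_pow_start: "0 < p \<Longrightarrow> j < p \<Longrightarrow> (sig m p ^^ j) (Suc m) = Suc m + j"
  by (simp add: sig_pow)

lemma sig_out: "0 < p \<Longrightarrow> \<not> (m < i \<and> i \<le> m + p) \<Longrightarrow> sig m p i = i"
  by (auto simp: sig_def)

lemma sig_inj: assumes "0 < p" shows "inj (sig m p)"
proof -
  have "(sig m p ^^ (p - 1)) \<circ> sig m p = sig m p ^^ p"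
    using assms by (metis Suc_diff_1 funpow_Suc_right)
  hence "(sig m p ^^ (p - 1)) \<circ> sig m p = id" using sig_pow_p assms by simp
  thus ?thesis by (metis inj_on_id inj_on_imageI2)
qed

lemma sig_R: "sig m p ` {m<..m+p} \<subseteq> {m<..m+p}"
  by (auto simp: sig_def)

lemma sig_all: "0 < p \<Longrightarrow> sig m p ` {1..m+p} \<subseteq> {1..m+p}"
  by (auto simp: sig_def)

lemma sig_img_eq:
  assumes "0 < p" "finite A" "sig m p ` A \<subseteq> A" shows "sig m p ` A = A"
  using assms sig_inj[OF assms(1)] by (metis card_image card_subset_eq inj_on_subset subset_UNIV)

lemma img_pow: fixes g :: "'a \<Rightarrow> 'a" and A :: "'a set"
  shows "(((`) g) ^^ k) A = (g ^^ k) ` A"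
  apply (induction k arbitrary: A)
   apply (simp add: funpow_0)
  apply (simp add: image_comp)
  done



lemma pblock_eq:
  assumes "partition_on U P" "b1 \<in> P" "b2 \<in> P" "x \<in> b1" "x \<in> b2"
  shows "b1 = b2"
  using assms unfolding partition_on_def disjoint_def pairwise_def disjnt_def by blast

lemma pblock_sub: "partition_on U P \<Longrightarrow> b \<in> P \<Longrightarrow> b \<subseteq> U"
  unfolding partition_on_def by blast

lemma pblock_ne: "partition_on U P \<Longrightarrow> b \<in> P \<Longrightarrow> b \<noteq> {}"
  unfolding partition_on_def by blast

lemma pblock_ex: "partition_on U P \<Longrightarrow> x \<in> U \<Longrightarrow> \<exists>b\<in>P. x \<in> b"
  unfolding partition_on_def by blast

lemma partition_onI2:
  assumes "\<Union>P = U" "\<And>b1 b2 x. b1 \<in> P \<Longrightarrow> b2 \<in> P \<Longrightarrow> x \<in> b1 \<Longrightarrow> x \<in> b2 \<Longrightarrow> b1 = b2"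
    "{} \<notin> P"
  shows "partition_on U P"
  using assms unfolding partition_on_def disjoint_def pairwise_def disjnt_def by blast

definition Psi :: "'a set \<Rightarrow> 'a set set \<Rightarrow> 'a set set" where
  "Psi R Q = {b\<in>Q. card b \<noteq> 1} \<union> {R \<union> \<Union>{b\<in>Q. card b = 1}}"

definition Phi :: "'a set \<Rightarrow> 'a set set \<Rightarrow> 'a set set" where
  "Phi R P = {b\<in>P. b \<inter> R = {}} \<union> (\<lambda>x. {x}) ` (\<Union>{b\<in>P. b \<inter> R \<noteq> {}} - R)"

lemma card1_block:
  assumes "partition_on A Q" "b \<in> Q" "card b = 1" "x \<in> b" shows "b = {x}"
  using assms by (metis card_1_singletonE singletonD)

lemma bij_part:
  assumes fA: "finite A" and fR: "finite R" and dAR: "A \<inter> R = {}" and cR: "card R \<ge> 2"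
  shows "card {P. partition_on (A \<union> R) P \<and> (\<forall>b\<in>P. card b \<noteq> 1) \<and> (\<exists>K\<in>P. R \<subseteq> K)}
         = card {Q. partition_on A Q}"
proof -
  define T where "T = {P. partition_on (A \<union> R) P \<and> (\<forall>b\<in>P. card b \<noteq> 1) \<and> (\<exists>K\<in>P. R \<subseteq> K)}"
  define Pa where "Pa = {Q. partition_on A Q}"
  have Rne: "R \<noteq> {}" using cR by auto
  have one: "Psi R Q \<in> T" if Q: "partition_on A Q" for Q
  proof -
    define S where "S = \<Union>{b\<in>Q. card b = 1}"
    define Q1 where "Q1 = {b\<in>Q. card b \<noteq> 1}"
    have PQ: "Psi R Q = Q1 \<union> {R \<union> S}" unfolding Psi_def S_def Q1_def by simp
    have SA: "S \<subseteq> A" using Q pblock_sub unfolding S_def by blast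
    have Q1A: "b \<subseteq> A" if "b \<in> Q1" for b using Q pblock_sub that Q1_def by blast
    have fS: "finite S" using SA fA finite_subset by blast
    have "card (R \<union> S) \<ge> card R" using fR fS by (simp add: card_mono)
    hence cRS: "card (R \<union> S) \<noteq> 1" using cR by simp
    have U: "\<Union>(Q1 \<union> {R \<union> S}) = A \<union> R"
    proof -
      have "\<Union>Q = A" using Q partition_onD1 by blast
      moreover have "\<Union>Q = \<Union>Q1 \<union> S" unfolding Q1_def S_def by blast
      ultimately show ?thesis by blast
    qed
    have disj: "b1 = b2" if "b1 \<in> Q1 \<union> {R \<union> S}" "b2 \<in> Q1 \<union> {R \<union> S}" "x \<in> b1" "x \<in> b2" for b1 b2 x
    proof -
      have noS: False if "b \<in> Q1" "x \<in> b" "x \<in> R \<union> S" for b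
      proof -
        have "x \<in> A" using that Q1A by blast
        hence "x \<in> S" using that dAR by blast
        then obtain c where c: "c \<in> Q" "card c = 1" "x \<in> c" unfolding S_def by blast
        have "b = c" using pblock_eq[OF Q, of b c x] that c Q1_def by blast
        thus False using that c Q1_def by simp
      qed
      show ?thesis using that noS pblock_eq[OF Q] Q1_def by blast
    qed
    have ne: "{} \<notin> Q1 \<union> {R \<union> S}" using Rne Q partition_onD3 Q1_def by blast
    have "partition_on (A \<union> R) (Psi R Q)" unfolding PQ by (rule partition_onI2[OF U disj ne])
    moreover have "\<forall>b\<in>Psi R Q. card b \<noteq> 1" using cRS PQ Q1_def by auto
    moreover have "\<exists>K\<in>Psi R Q. R \<subseteq> K" using PQ by auto
    ultimately show ?thesis unfolding T_def by blast
  qed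
  have Kuniq: "{b\<in>P. b \<inter> R \<noteq> {}} = {K}" if P: "partition_on (A \<union> R) P" and K: "K \<in> P" "R \<subseteq> K" for P K
  proof -
    have "b = K" if "b \<in> P" "b \<inter> R \<noteq> {}" for b
      using that pblock_eq[OF P, of b K] K by blast
    thus ?thesis using K Rne by blast
  qed
  have PhiK: "Phi R P = {b\<in>P. b \<inter> R = {}} \<union> (\<lambda>x. {x}) ` (K - R)"
    if P: "partition_on (A \<union> R) P" and K: "K \<in> P" "R \<subseteq> K" for P K
    unfolding Phi_def Kuniq[OF P K] by simp
  have two: "Phi R P \<in> Pa" if PT: "P \<in> T" for P
  proof -
    obtain K where P: "partition_on (A \<union> R) P" and K: "K \<in> P" "R \<subseteq> K"
      and nc: "\<forall>b\<in>P. card b \<noteq> 1" using PT T_def by blast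
    define P0 where "P0 = {b\<in>P. b \<inter> R = {}}"
    have E: "Phi R P = P0 \<union> (\<lambda>x. {x}) ` (K - R)" using PhiK[OF P K] P0_def by simp
    have U: "\<Union>(P0 \<union> (\<lambda>x. {x}) ` (K - R)) = A"
    proof
      show "\<Union>(P0 \<union> (\<lambda>x. {x}) ` (K - R)) \<subseteq> A"
        using pblock_sub[OF P] K P0_def by blast
      show "A \<subseteq> \<Union>(P0 \<union> (\<lambda>x. {x}) ` (K - R))"
      proof
        fix x assume xA: "x \<in> A"
        then obtain b where b: "b \<in> P" "x \<in> b" using pblock_ex[OF P] by blast
        show "x \<in> \<Union>(P0 \<union> (\<lambda>x. {x}) ` (K - R))"
        proof (cases "b = K")
          case True then show ?thesis using b xA dAR by blast
        next
          case False
          have "b \<inter> R = {}" using pblock_eq[OF P, of b K] b K False by blast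
          then show ?thesis using b P0_def by blast
        qed
      qed
    qed
    have disj: "b1 = b2" if "b1 \<in> P0 \<union> (\<lambda>x. {x}) ` (K - R)" "b2 \<in> P0 \<union> (\<lambda>x. {x}) ` (K - R)"
      "x \<in> b1" "x \<in> b2" for b1 b2 x
    proof -
      have noS: False if "b \<in> P0" "x \<in> b" "x \<in> K" for b
      proof -
        have "b = K" using pblock_eq[OF P, of b K x] that K P0_def by blast
        thus False using that K P0_def Rne by blast
      qed
      show ?thesis using that noS pblock_eq[OF P] P0_def by blast
    qed
    have ne: "{} \<notin> P0 \<union> (\<lambda>x. {x}) ` (K - R)" using P partition_onD3 P0_def by blast
    have "partition_on A (P0 \<union> (\<lambda>x. {x}) ` (K - R))" by (rule partition_onI2[OF U disj ne])
    thus ?thesis unfolding Pa_def E by blast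
  qed
  have three: "Phi R (Psi R Q) = Q" if Q: "partition_on A Q" for Q
  proof -
    define S where "S = \<Union>{b\<in>Q. card b = 1}"
    define Q1 where "Q1 = {b\<in>Q. card b \<noteq> 1}"
    have PQ: "Psi R Q = Q1 \<union> {R \<union> S}" unfolding Psi_def S_def Q1_def by simp
    have SA: "S \<subseteq> A" using Q pblock_sub unfolding S_def by blast
    have Q1A: "b \<subseteq> A" if "b \<in> Q1" for b using Q pblock_sub that Q1_def by blast
    have PT: "Psi R Q \<in> T" using one Q by blast
    have P: "partition_on (A \<union> R) (Psi R Q)" using PT T_def by blast
    have E: "Phi R (Psi R Q) = {b\<in>Psi R Q. b \<inter> R = {}} \<union> (\<lambda>x. {x}) ` ((R \<union> S) - R)"
      by (rule PhiK[OF P]) (auto simp: PQ)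
    have E1: "{b\<in>Psi R Q. b \<inter> R = {}} = Q1" using PQ Q1A dAR Rne by blast
    have E2: "(R \<union> S) - R = S" using SA dAR by blast
    have E3: "(\<lambda>x. {x}) ` S = {b\<in>Q. card b = 1}"
    proof
      show "(\<lambda>x. {x}) ` S \<subseteq> {b\<in>Q. card b = 1}"
        using card1_block[OF Q] unfolding S_def by blast
      show "{b\<in>Q. card b = 1} \<subseteq> (\<lambda>x. {x}) ` S"
      proof
        fix b assume b: "b \<in> {b\<in>Q. card b = 1}"
        then obtain x where "b = {x}" by (metis (mono_tags, lifting) card_1_singletonE mem_Collect_eq)
        thus "b \<in> (\<lambda>x. {x}) ` S" using b S_def by blast
      qed
    qed
    show ?thesis unfolding E E1 E2 E3 Q1_def by blast
  qed
  have four: "Psi R (Phi R P) = P" if PT: "P \<in> T" for P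
  proof -
    obtain K where P: "partition_on (A \<union> R) P" and K: "K \<in> P" "R \<subseteq> K"
      and nc: "\<forall>b\<in>P. card b \<noteq> 1" using PT T_def by blast
    define P0 where "P0 = {b\<in>P. b \<inter> R = {}}"
    have E: "Phi R P = P0 \<union> (\<lambda>x. {x}) ` (K - R)" using PhiK[OF P K] P0_def by simp
    have E1: "{b\<in>Phi R P. card b \<noteq> 1} = P0" using E nc P0_def by auto
    have E2: "\<Union>{b\<in>Phi R P. card b = 1} = K - R"
    proof
      show "\<Union>{b\<in>Phi R P. card b = 1} \<subseteq> K - R" using E nc P0_def by auto
      show "K - R \<subseteq> \<Union>{b\<in>Phi R P. card b = 1}"
      proof
        fix x assume x: "x \<in> K - R"
        hence "{x} \<in> {b\<in>Phi R P. card b = 1}" using E by auto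
        thus "x \<in> \<Union>{b\<in>Phi R P. card b = 1}" by blast
      qed
    qed
    have E3: "R \<union> (K - R) = K" using K by blast
    have E4: "P0 \<union> {K} = P"
    proof -
      have "b = K" if "b \<in> P" "b \<inter> R \<noteq> {}" for b
        using that pblock_eq[OF P, of b K] K by blast
      thus ?thesis using K P0_def by blast
    qed
    show ?thesis unfolding Psi_def E1 E2 E3 E4 ..
  qed
  have "bij_betw (Psi R) Pa T"
    by (rule bij_betw_byWitness[where f'="Phi R"]) (use one two three four Pa_def in auto)
  hence "card Pa = card T" by (rule bij_betw_same_card)
  thus ?thesis unfolding T_def Pa_def by simp
qed



lemma sig_fix_set:
  assumes p0: "0 < p" and h: "{m<..m+p} \<subseteq> b \<or> b \<inter> {m<..m+p} = {}"
  shows "sig m p ` b = b"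
proof -
  let ?R = "{m<..m+p}"
  have e: "b = (b \<inter> ?R) \<union> (b - ?R)" by blast
  have "sig m p ` (b - ?R) = b - ?R"
  proof -
    have "sig m p ` (b - ?R) = (\<lambda>x. x) ` (b - ?R)"
      by (rule image_cong) (auto intro: sig_out[OF p0])
    thus ?thesis by simp
  qed
  moreover have "sig m p ` (b \<inter> ?R) = b \<inter> ?R"
  proof (cases "?R \<subseteq> b")
    case True
    hence "b \<inter> ?R = ?R" by blast
    thus ?thesis using sig_img_eq[OF p0 _ sig_R] by simp
  next
    case False
    hence "b \<inter> ?R = {}" using h by blast
    thus ?thesis by simp
  qed
  ultimately show ?thesis by (metis e image_Un)
qed

lemma main_cong:
  fixes p m :: nat
  assumes p: "prime p"
  shows "[V (m+p) = Bell m] (mod p)"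
proof -
  have p0: "0 < p" using p prime_gt_0_nat by blast
  have p2: "2 \<le> p" using p prime_ge_2_nat by blast
  define R where "R = {m<..m+p}"
  define X where "X = {P. partition_on {1..m+p} P \<and> (\<forall>b\<in>P. card b \<noteq> 1)}"
  define F where "F = (`) ((`) (sig m p))"
  have finX: "finite X"
    by (rule finite_subset[OF _ finitely_many_partition_on[of "{1..m+p}"]]) (auto simp: X_def)
  have injs: "inj (sig m p)" using sig_inj[OF p0] .
  have sigU: "sig m p ` {1..m+p} = {1..m+p}" using sig_img_eq[OF p0 _ sig_all[OF p0]] by simp
  have cl: "F P \<in> X" if PX: "P \<in> X" for P
  proof -
    have Pp: "partition_on {1..m+p} P" and nc: "\<forall>b\<in>P. card b \<noteq> 1" using PX X_def by auto
    have "partition_on (sig m p ` {1..m+p}) ((`) (sig m p) ` P - {{}})"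
      by (rule partition_on_inj_image[OF Pp inj_on_subset[OF injs]]) simp
    moreover have "(`) (sig m p) ` P - {{}} = F P"
      using partition_onD3[OF Pp] F_def by auto
    ultimately have "partition_on {1..m+p} (F P)" using sigU by simp
    moreover have "\<forall>b\<in>F P. card b \<noteq> 1"
      using nc F_def card_image[OF inj_on_subset[OF injs]] by auto
    ultimately show ?thesis using X_def by simp
  qed
  have Fpow: "(F ^^ k) P = (\<lambda>b. (sig m p ^^ k) ` b) ` P" for k P
  proof -
    have "(F ^^ k) P = ((`) (sig m p) ^^ k) ` P" unfolding F_def by (rule img_pow)
    also have "\<dots> = (\<lambda>b. (sig m p ^^ k) ` b) ` P" by (simp add: img_pow)
    finally show ?thesis .
  qed
  have per: "(F ^^ p) P = P" for P using Fpow sig_pow_p[OF p0] by simp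
  have orbit: "[card X = card {P\<in>X. F P = P}] (mod p)"
    by (rule orbit_mod[OF p finX cl per])
  have char: "F P = P \<longleftrightarrow> (\<exists>K\<in>P. R \<subseteq> K)" if PX: "P \<in> X" for P
  proof
    have Pp: "partition_on {1..m+p} P" and nc: "\<forall>b\<in>P. card b \<noteq> 1" using PX X_def by auto
    assume FP: "F P = P"
    have Pk: "(sig m p ^^ k) ` b \<in> P" if "b \<in> P" for b k
    proof -
      have "(F ^^ k) P = P" using FP by (induction k) auto
      thus ?thesis using Fpow that by blast
    qed
    obtain B where B: "B \<in> P" "Suc m \<in> B" using pblock_ex[OF Pp, of "Suc m"] p0 by auto
    have fB: "finite B" using pblock_sub[OF Pp B(1)] finite_subset by blast
    obtain b where b: "b \<in> B" "b \<noteq> Suc m"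
    proof (rule ccontr)
      assume "\<not> thesis"
      hence "B = {Suc m}" using that B by blast
      hence "card B = 1" by simp
      thus False using nc B by blast
    qed
    have bU: "b \<in> {1..m+p}" using pblock_sub[OF Pp B(1)] b by blast
    have gfix: "((`) (sig m p) ^^ p) B = B" by (simp add: img_pow sig_pow_p[OF p0])
    have sB: "sig m p ` B = B"
    proof (cases "b \<in> R")
      case False
      hence "sig m p b = b" using sig_out[OF p0] R_def by auto
      hence "b \<in> sig m p ` B" using b by force
      moreover have "sig m p ` B \<in> P" using Pk[OF B(1), of 1] by simp
      ultimately show ?thesis using pblock_eq[OF Pp _ B(1)] b by blast
    next
      case True
      define j where "j = b - Suc m"
      have j: "0 < j" "j < p" using True b R_def j_def by auto
      have "(sig m p ^^ j) (Suc m) = b" using sig_pow_start[OF p0 j(2)] j_def True R_def by auto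
      hence "b \<in> (sig m p ^^ j) ` B" using B by force
      hence "(sig m p ^^ j) ` B = B" using pblock_eq[OF Pp Pk[OF B(1)] B(1)] b by blast
      hence "((`) (sig m p) ^^ j) B = B" by (simp add: img_pow)
      thus ?thesis using fix_pow[OF p gfix _ j] by simp
    qed
    have "(sig m p ^^ k) ` B = B" for k
    proof -
      have "((`) (sig m p) ^^ k) B = B" using sB by (induction k) auto
      thus ?thesis by (simp add: img_pow)
    qed
    hence "R \<subseteq> B"
    proof -
      assume all: "\<And>k. (sig m p ^^ k) ` B = B"
      show "R \<subseteq> B"
      proof
        fix i assume i: "i \<in> R"
        have "(sig m p ^^ (i - Suc m)) (Suc m) = i"
          using i R_def sig_pow_start[OF p0, of "i - Suc m" m] by auto
        thus "i \<in> B" using all[of "i - Suc m"] B by force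
      qed
    qed
    thus "\<exists>K\<in>P. R \<subseteq> K" using B by blast
  next
    have Pp: "partition_on {1..m+p} P" using PX X_def by auto
    assume "\<exists>K\<in>P. R \<subseteq> K"
    then obtain K where K: "K \<in> P" "R \<subseteq> K" by blast
    have "sig m p ` b = b" if "b \<in> P" for b
    proof (rule sig_fix_set[OF p0])
      show "{m<..m+p} \<subseteq> b \<or> b \<inter> {m<..m+p} = {}"
        using pblock_eq[OF Pp that K(1)] K R_def by blast
    qed
    hence "F P = (\<lambda>b. b) ` P" unfolding F_def by (intro image_cong) auto
    thus "F P = P" by simp
  qed
  have "{P\<in>X. F P = P} = {P. partition_on ({1..m} \<union> R) P \<and> (\<forall>b\<in>P. card b \<noteq> 1) \<and> (\<exists>K\<in>P. R \<subseteq> K)}"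
  proof -
    have "{1..m} \<union> R = {1..m+p}" using R_def p0 by auto
    thus ?thesis using char X_def by auto
  qed
  moreover have "card {P. partition_on ({1..m} \<union> R) P \<and> (\<forall>b\<in>P. card b \<noteq> 1) \<and> (\<exists>K\<in>P. R \<subseteq> K)}
      = card {Q. partition_on {1..m} Q}"
    by (rule bij_part) (use p2 R_def in auto)
  ultimately have "card {P\<in>X. F P = P} = Bell m" unfolding Bell_def by simp
  moreover have "card X = V (m+p)" unfolding V_def X_def ..
  ultimately show ?thesis using orbit by simp
qed

theorem corollary3:
  fixes p n :: nat
  assumes "prime p" and "n \<ge> p"
  shows "[Bell (n - p) = V n] (mod p)"
proof -
  have "n = (n - p) + p" using assms by simp
  then show ?thesis using main_cong[OF assms(1), of "n - p"] by (metis cong_sym)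
qed


end
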